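(* Let $p,q$ be distinct odd primes, $G=\mathrm{Gal}(\mathbb{Q}(\zeta_p)/\mathbb{Q})$ and $\theta=\sum_{\tau\in G}n_\tau\tau\in\mathbb{Z}[G]$. Define the formal power series $$F(T)=\prod_{\tau\in G}(1-\tau(\zeta_p)T)^{n_\tau/q}\in\mathbb{Q}(\zeta_p)[[T]],\qquad (1-\tau(\zeta_p)T)^{n_\tau/q}=\sum_{k\ge0}\binom{n_\tau/q}{k}(-\tau(\zeta_p)T)^k .$$ Then: (a) every coefficient of $F$ is of the form $a/q^s$ with $a\in\mathbb{Z}[\zeta_p]$ and $s\ge0$; (b) $F(T)=\sum_{k\ge0}\frac{a_k}{k!\,q^k}T^k$ with $a_k\in\mathbb{Z}[\zeta_p]$ and $a_k\equiv\bigl(-\sum_{\tau\in G}n_\tau\tau(\zeta_p)\bigr)^k\pmod{q\mathbb{Z}[\zeta_p]}$ for all $k$; (c) for $\sigma\in G$ and $t\in\mathbb{C}$ with $|t|<1$ the series $F^\sigma(t)$ converges; moreover, if $0\le n_\tau\le q$ for all $\tau\in G$, then for every $k\ge0$ $$|F^\sigma(t)-F^\sigma_k(t)|\le\left|\binom{-m}{k+1}\right|\frac{|t|^{k+1}}{(1-|t|)^{m+k+1}},\qquad m=\frac1q\sum_{\tau\in G}n_\tau .$$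
   Context: $\zeta_p=e^{2i\pi/p}$; $\binom{r}{k}=r(r-1)\cdots(r-k+1)/k!$ for rational $r$. $F^\sigma$ is the series obtained by applying $\sigma$ to every coefficient of $F$, and $F^\sigma_k$ is the polynomial formed by the terms of $F^\sigma$ of degree at most $k$. *)

theory Defs
  imports "HOL-Analysis.Analysis" "HOL-Computational_Algebra.Formal_Power_Series"
begin

definition zeta :: "nat \<Rightarrow> complex" where
  "zeta p = cis (2 * pi / real p)"

definition cyc_field :: "nat \<Rightarrow> complex set" where
  "cyc_field p = {x. \<exists>r :: nat \<Rightarrow> rat. x = (\<Sum>i<p. of_rat (r i) * zeta p ^ i)}"

definition cyc_int :: "nat \<Rightarrow> complex set" where
  "cyc_int p = {x. \<exists>c :: nat \<Rightarrow> int. x = (\<Sum>i<p. of_int (c i) * zeta p ^ i)}"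

text \<open>Gal(Q(zeta_p)/Q): field automorphisms of Q(zeta_p), extended by the identity
  outside Q(zeta_p) so that each automorphism is represented by a unique function.\<close>
definition gal_cyc :: "nat \<Rightarrow> (complex \<Rightarrow> complex) set" where
  "gal_cyc p = {\<sigma>. bij_betw \<sigma> (cyc_field p) (cyc_field p)
      \<and> (\<forall>x\<in>cyc_field p. \<forall>y\<in>cyc_field p. \<sigma> (x + y) = \<sigma> x + \<sigma> y \<and> \<sigma> (x * y) = \<sigma> x * \<sigma> y)
      \<and> \<sigma> 1 = 1
      \<and> (\<forall>x. x \<notin> cyc_field p \<longrightarrow> \<sigma> x = x)}"

definition F_series :: "nat \<Rightarrow> nat \<Rightarrow> ((complex \<Rightarrow> complex) \<Rightarrow> int) \<Rightarrow> complex fps" where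
  "F_series p q n = (\<Prod>\<tau>\<in>gal_cyc p.
      Abs_fps (\<lambda>k. ((of_int (n \<tau>) / of_nat q :: complex) gchoose k) * (- \<tau> (zeta p)) ^ k))"

definition fps_conj :: "(complex \<Rightarrow> complex) \<Rightarrow> complex fps \<Rightarrow> complex fps" where
  "fps_conj \<sigma> F = Abs_fps (\<lambda>k. \<sigma> (fps_nth F k))"

end

theory Submission
  imports Defs "HOL-Number_Theory.Cong"
begin



definition sr :: "complex set \<Rightarrow> bool" where
  "sr C \<longleftrightarrow> 0 \<in> C \<and> 1 \<in> C \<and> (\<forall>a\<in>C. \<forall>b\<in>C. a + b \<in> C \<and> a * b \<in> C \<and> - a \<in> C)"

definition spanC :: "complex set \<Rightarrow> nat \<Rightarrow> complex set" where
  "spanC C p = {x. \<exists>c. (\<forall>i. c i \<in> C) \<and> x = (\<Sum>i<p. c i * zeta p ^ i)}"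

lemma spanC_intro: "(\<forall>i. c i \<in> C) \<Longrightarrow> x = (\<Sum>i<p. c i * zeta p ^ i) \<Longrightarrow> x \<in> spanC C p"
  unfolding spanC_def by blast

lemma sr_Ints: "sr \<int>" by (auto simp: sr_def)
lemma sr_Rats: "sr \<rat>" by (auto simp: sr_def)

lemma cyc_int_eq: "cyc_int p = spanC \<int> p"
proof -
  { fix c :: "nat \<Rightarrow> complex" assume "\<forall>i. c i \<in> \<int>"
    then have "\<forall>i. \<exists>k. c i = of_int k" by (metis Ints_cases)
    then obtain d where "\<forall>i. c i = of_int (d i)" by metis
    then have "\<exists>d::nat\<Rightarrow>int. (\<Sum>i<p. c i * zeta p ^ i) = (\<Sum>i<p. of_int (d i) * zeta p ^ i)" by auto }
  note * = this
  show ?thesis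
  proof (intro set_eqI iffI)
    fix x assume "x \<in> cyc_int p"
    then obtain d :: "nat \<Rightarrow> int" where "x = (\<Sum>i<p. of_int (d i) * zeta p ^ i)" unfolding cyc_int_def by auto
    then show "x \<in> spanC \<int> p" by (intro spanC_intro[of "\<lambda>i. of_int (d i)"]) auto
  next
    fix x assume "x \<in> spanC \<int> p"
    then obtain c where "\<forall>i. c i \<in> \<int>" "x = (\<Sum>i<p. c i * zeta p ^ i)" unfolding spanC_def by auto
    then show "x \<in> cyc_int p" using * unfolding cyc_int_def by auto
  qed
qed

lemma cyc_field_eq: "cyc_field p = spanC \<rat> p"
proof -
  { fix c :: "nat \<Rightarrow> complex" assume "\<forall>i. c i \<in> \<rat>"
    then have "\<forall>i. \<exists>k. c i = of_rat k" by (metis Rats_cases)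
    then obtain d where "\<forall>i. c i = of_rat (d i)" by metis
    then have "\<exists>d::nat\<Rightarrow>rat. (\<Sum>i<p. c i * zeta p ^ i) = (\<Sum>i<p. of_rat (d i) * zeta p ^ i)" by auto }
  note * = this
  show ?thesis
  proof (intro set_eqI iffI)
    fix x assume "x \<in> cyc_field p"
    then obtain d :: "nat \<Rightarrow> rat" where "x = (\<Sum>i<p. of_rat (d i) * zeta p ^ i)" unfolding cyc_field_def by auto
    then show "x \<in> spanC \<rat> p" by (intro spanC_intro[of "\<lambda>i. of_rat (d i)"]) auto
  next
    fix x assume "x \<in> spanC \<rat> p"
    then obtain c where "\<forall>i. c i \<in> \<rat>" "x = (\<Sum>i<p. c i * zeta p ^ i)" unfolding spanC_def by auto
    then show "x \<in> cyc_field p" using * unfolding cyc_field_def by auto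
  qed
qed

lemma zeta_pow_p: "p > 0 \<Longrightarrow> zeta p ^ p = 1"
proof -
  assume p: "p > 0"
  have dm: "cis a ^ n = cis (real n * a)" for a n
    by (induct n) (simp_all add: algebra_simps cis_mult)
  have "cis (2*pi/real p) ^ p = cis (real p * (2*pi/real p))" by (rule dm)
  also have "\<dots> = 1" using p by (simp add: complex_eq_iff)
  finally show ?thesis unfolding zeta_def .
qed

context
  fixes C :: "complex set" and p :: nat assumes C: "sr C" and p: "p > 0"
begin

lemma spanC_add: "x \<in> spanC C p \<Longrightarrow> y \<in> spanC C p \<Longrightarrow> x + y \<in> spanC C p"
proof -
  assume "x \<in> spanC C p" "y \<in> spanC C p"
  then obtain c d where c: "\<forall>i. c i \<in> C" "x = (\<Sum>i<p. c i * zeta p ^ i)"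
    and d: "\<forall>i. d i \<in> C" "y = (\<Sum>i<p. d i * zeta p ^ i)" unfolding spanC_def by auto
  have "x + y = (\<Sum>i<p. (c i + d i) * zeta p ^ i)" using c d by (simp add: sum.distrib distrib_right)
  moreover have "\<forall>i. c i + d i \<in> C" using c d C by (auto simp: sr_def)
  ultimately show ?thesis by (intro spanC_intro[of "\<lambda>i. c i + d i"]) auto
qed

lemma spanC_scal: "a \<in> C \<Longrightarrow> x \<in> spanC C p \<Longrightarrow> a * x \<in> spanC C p"
proof -
  assume a: "a \<in> C" and "x \<in> spanC C p"
  then obtain c where c: "\<forall>i. c i \<in> C" "x = (\<Sum>i<p. c i * zeta p ^ i)" unfolding spanC_def by auto
  have "a * x = (\<Sum>i<p. (a * c i) * zeta p ^ i)" using c by (simp add: sum_distrib_left mult.assoc)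
  moreover have "\<forall>i. a * c i \<in> C" using c a C by (auto simp: sr_def)
  ultimately show ?thesis by (intro spanC_intro[of "\<lambda>i. a * c i"]) auto
qed

lemma spanC_const: "a \<in> C \<Longrightarrow> a \<in> spanC C p"
proof -
  assume a: "a \<in> C"
  have "(\<Sum>i<p. (if i = 0 then a else 0) * zeta p ^ i) = (\<Sum>i<p. (if i = 0 then a else 0))"
    by (intro sum.cong) auto
  also have "\<dots> = a" using p by (simp add: sum.delta)
  finally have "a = (\<Sum>i<p. (if i = 0 then a else 0) * zeta p ^ i)" by simp
  moreover have "\<forall>i. (if i = 0 then a else 0) \<in> C" using a C by (auto simp: sr_def)
  ultimately show ?thesis by (intro spanC_intro[of "\<lambda>i. if i = 0 then a else 0"]) auto
qed

lemma spanC_zeta: "x \<in> spanC C p \<Longrightarrow> zeta p * x \<in> spanC C p"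
proof -
  assume "x \<in> spanC C p"
  then obtain c where c: "\<forall>i. c i \<in> C" "x = (\<Sum>i<p. c i * zeta p ^ i)" unfolding spanC_def by auto
  obtain m where m: "p = Suc m" using p by (cases p) auto
  define d where "d = (\<lambda>i. case i of 0 \<Rightarrow> c m | Suc j \<Rightarrow> c j)"
  have "zeta p * x = (\<Sum>i<p. c i * zeta p ^ Suc i)" unfolding c(2) sum_distrib_left
    by (intro sum.cong) (simp_all add: mult_ac)
  also have "\<dots> = (\<Sum>i<Suc m. c i * zeta p ^ Suc i)" using m by simp
  also have "\<dots> = (\<Sum>i<m. c i * zeta p ^ Suc i) + c m" using zeta_pow_p[OF p] m by simp
  also have "\<dots> = (\<Sum>i<Suc m. d i * zeta p ^ i)"
    by (subst sum.lessThan_Suc_shift) (simp add: d_def)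
  finally have "zeta p * x = (\<Sum>i<p. d i * zeta p ^ i)" using m by simp
  moreover have "\<forall>i. d i \<in> C" using c by (auto simp: d_def split: nat.split)
  ultimately show ?thesis by (intro spanC_intro[of d]) auto
qed

lemma spanC_zpow: "x \<in> spanC C p \<Longrightarrow> zeta p ^ j * x \<in> spanC C p"
  by (induction j) (auto simp: mult.assoc intro: spanC_zeta)

lemma spanC_sum: "finite A \<Longrightarrow> (\<And>i. i \<in> A \<Longrightarrow> f i \<in> spanC C p) \<Longrightarrow> sum f A \<in> spanC C p"
  by (induction A rule: finite_induct) (auto intro: spanC_add spanC_const simp: C[unfolded sr_def])

lemma spanC_mult: "x \<in> spanC C p \<Longrightarrow> y \<in> spanC C p \<Longrightarrow> x * y \<in> spanC C p"
proof -
  assume "x \<in> spanC C p" and y: "y \<in> spanC C p"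
  then obtain c where c: "\<forall>i. c i \<in> C" "x = (\<Sum>i<p. c i * zeta p ^ i)" unfolding spanC_def by auto
  have "x * y = (\<Sum>i<p. c i * (zeta p ^ i * y))" unfolding c(2) sum_distrib_right
    by (intro sum.cong) (simp_all add: mult_ac)
  also have "\<dots> \<in> spanC C p"
    by (intro spanC_sum spanC_scal spanC_zpow) (use c y in auto)
  finally show ?thesis .
qed

lemma spanC_neg: "x \<in> spanC C p \<Longrightarrow> - x \<in> spanC C p"
proof -
  have "-1 \<in> C" using C by (auto simp: sr_def)
  then show "x \<in> spanC C p \<Longrightarrow> - x \<in> spanC C p" using spanC_scal[of "-1" x] by simp
qed

lemma spanC_diff: "x \<in> spanC C p \<Longrightarrow> y \<in> spanC C p \<Longrightarrow> x - y \<in> spanC C p"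
  using spanC_add[of x "-y"] spanC_neg[of y] by simp

lemma spanC_pow: "x \<in> spanC C p \<Longrightarrow> x ^ j \<in> spanC C p"
  by (induction j) (auto intro: spanC_mult spanC_const simp: C[unfolded sr_def])

lemma spanC_prod: "finite A \<Longrightarrow> (\<And>i. i \<in> A \<Longrightarrow> f i \<in> spanC C p) \<Longrightarrow> prod f A \<in> spanC C p"
  by (induction A rule: finite_induct) (auto intro: spanC_mult spanC_const simp: C[unfolded sr_def])

lemma spanC_zeta_pow: "zeta p ^ j \<in> spanC C p"
  using spanC_zpow[OF spanC_const[of 1], of j] C by (simp add: sr_def)

end




lemma dm: "cis a ^ n = cis (real n * a)"
  by (induct n) (simp_all add: algebra_simps cis_mult)

context
  fixes p :: nat assumes p: "p > 0"
begin

lemma K_add: "x \<in> cyc_field p \<Longrightarrow> y \<in> cyc_field p \<Longrightarrow> x + y \<in> cyc_field p"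
  unfolding cyc_field_eq by (rule spanC_add[OF sr_Rats p])
lemma K_mult: "x \<in> cyc_field p \<Longrightarrow> y \<in> cyc_field p \<Longrightarrow> x * y \<in> cyc_field p"
  unfolding cyc_field_eq by (rule spanC_mult[OF sr_Rats p])
lemma K_neg: "x \<in> cyc_field p \<Longrightarrow> - x \<in> cyc_field p"
  unfolding cyc_field_eq by (rule spanC_neg[OF sr_Rats p])
lemma K_rat: "x \<in> \<rat> \<Longrightarrow> x \<in> cyc_field p"
  unfolding cyc_field_eq by (rule spanC_const[OF sr_Rats p])
lemma K_pow: "x \<in> cyc_field p \<Longrightarrow> x ^ n \<in> cyc_field p"
  unfolding cyc_field_eq by (rule spanC_pow[OF sr_Rats p])
lemma K_sum: "finite A \<Longrightarrow> (\<And>i. i \<in> A \<Longrightarrow> f i \<in> cyc_field p) \<Longrightarrow> sum f A \<in> cyc_field p"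
  unfolding cyc_field_eq by (rule spanC_sum[OF sr_Rats p])
lemma K_zeta: "zeta p \<in> cyc_field p"
  using spanC_zeta_pow[OF sr_Rats p, of 1] by (simp add: cyc_field_eq)

lemma R_add: "x \<in> cyc_int p \<Longrightarrow> y \<in> cyc_int p \<Longrightarrow> x + y \<in> cyc_int p"
  unfolding cyc_int_eq by (rule spanC_add[OF sr_Ints p])
lemma R_diff: "x \<in> cyc_int p \<Longrightarrow> y \<in> cyc_int p \<Longrightarrow> x - y \<in> cyc_int p"
  unfolding cyc_int_eq by (rule spanC_diff[OF sr_Ints p])
lemma R_mult: "x \<in> cyc_int p \<Longrightarrow> y \<in> cyc_int p \<Longrightarrow> x * y \<in> cyc_int p"
  unfolding cyc_int_eq by (rule spanC_mult[OF sr_Ints p])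
lemma R_neg: "x \<in> cyc_int p \<Longrightarrow> - x \<in> cyc_int p"
  unfolding cyc_int_eq by (rule spanC_neg[OF sr_Ints p])
lemma R_int: "x \<in> \<int> \<Longrightarrow> x \<in> cyc_int p"
  unfolding cyc_int_eq by (rule spanC_const[OF sr_Ints p])
lemma R_of_int: "of_int k \<in> cyc_int p"
  by (rule R_int) simp
lemma R_pow: "x \<in> cyc_int p \<Longrightarrow> x ^ n \<in> cyc_int p"
  unfolding cyc_int_eq by (rule spanC_pow[OF sr_Ints p])
lemma R_sum: "finite A \<Longrightarrow> (\<And>i. i \<in> A \<Longrightarrow> f i \<in> cyc_int p) \<Longrightarrow> sum f A \<in> cyc_int p"
  unfolding cyc_int_eq by (rule spanC_sum[OF sr_Ints p])
lemma R_sub_K: "x \<in> cyc_int p \<Longrightarrow> x \<in> cyc_field p"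
proof -
  assume "x \<in> cyc_int p"
  then obtain c where c: "\<forall>i. c i \<in> \<int>" "x = (\<Sum>i<p. c i * zeta p ^ i)"
    unfolding cyc_int_eq spanC_def by auto
  have "\<forall>i. c i \<in> \<rat>" using c(1) Ints_subset_Rats by blast
  then show ?thesis unfolding cyc_field_eq using c(2) by (rule spanC_intro)
qed

lemma root_in_R: "z ^ p = 1 \<Longrightarrow> z \<in> cyc_int p"
proof -
  assume "z ^ p = 1"
  then have "z \<in> (\<lambda>k. cis (2 * pi * real k / real p)) ` {..<p}"
    using Complex.bij_betw_roots_unity[OF p] unfolding bij_betw_def by auto
  then obtain k where "z = cis (2 * pi * real k / real p)" by auto
  also have "\<dots> = zeta p ^ k" unfolding zeta_def dm by (simp add: field_simps)
  finally show ?thesis using spanC_zeta_pow[OF sr_Ints p, of k] by (simp add: cyc_int_eq)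
qed

context
  fixes \<sigma> assumes \<sigma>: "\<sigma> \<in> gal_cyc p"
begin

lemma g_add: "x \<in> cyc_field p \<Longrightarrow> y \<in> cyc_field p \<Longrightarrow> \<sigma> (x + y) = \<sigma> x + \<sigma> y"
  using \<sigma> unfolding gal_cyc_def by blast
lemma g_mult: "x \<in> cyc_field p \<Longrightarrow> y \<in> cyc_field p \<Longrightarrow> \<sigma> (x * y) = \<sigma> x * \<sigma> y"
  using \<sigma> unfolding gal_cyc_def by blast
lemma g_1: "\<sigma> 1 = 1"
  using \<sigma> unfolding gal_cyc_def by blast
lemma g_maps: "x \<in> cyc_field p \<Longrightarrow> \<sigma> x \<in> cyc_field p"
  using \<sigma> unfolding gal_cyc_def bij_betw_def by blast
lemma K_0: "0 \<in> cyc_field p" using K_rat[of 0] by simp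
lemma K_1: "1 \<in> cyc_field p" using K_rat[of 1] by simp
lemma g_0: "\<sigma> 0 = 0"
  using g_add[OF K_0 K_0] by simp
lemma g_neg: "x \<in> cyc_field p \<Longrightarrow> \<sigma> (- x) = - \<sigma> x"
proof -
  assume x: "x \<in> cyc_field p"
  have h: "\<sigma> x + \<sigma> (-x) = 0" using g_add[OF x K_neg[OF x]] g_0 by simp
  have "\<sigma> (-x) = (\<sigma> x + \<sigma> (-x)) - \<sigma> x" by simp
  also have "\<dots> = - \<sigma> x" using h by simp
  finally show ?thesis .
qed
lemma g_of_nat: "\<sigma> (of_nat n) = of_nat n"
proof (induction n)
  case 0 then show ?case using g_0 by simp
next
  case (Suc n)
  have "\<sigma> (of_nat n + 1) = \<sigma> (of_nat n) + \<sigma> 1"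
    by (rule g_add) (auto intro: K_rat)
  then show ?case using Suc g_1 by (simp add: add.commute)
qed
lemma g_of_int: "\<sigma> (of_int k) = of_int k"
proof (cases "k \<ge> 0")
  case True then show ?thesis using g_of_nat[of "nat k"] by simp
next
  case False
  then have "of_int k = - (of_nat (nat (-k)) :: complex)" by simp
  moreover have "of_nat (nat (-k)) \<in> cyc_field p" by (rule K_rat) simp
  ultimately show ?thesis using g_neg[of "of_nat (nat (-k))"] g_of_nat[of "nat (-k)"]
    by (simp del: of_nat_nat)
qed
lemma g_rat: "x \<in> \<rat> \<Longrightarrow> \<sigma> x = x"
proof -
  assume "x \<in> \<rat>"
  then obtain a b where ab: "b > 0" "x = of_int a / of_int b" by (auto elim: Rats_cases')
  have "\<sigma> (of_int b * x) = \<sigma> (of_int b) * \<sigma> x"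
    by (rule g_mult) (use ab in \<open>auto intro!: K_rat\<close>)
  moreover have "of_int b * x = of_int a" using ab by simp
  ultimately have "of_int b * \<sigma> x = of_int a" using g_of_int[of a] g_of_int[of b] by simp
  then have "\<sigma> x = of_int a / of_int b" using ab(1) by (simp add: field_simps)
  then show ?thesis using ab by simp
qed
lemma g_sum: "finite A \<Longrightarrow> (\<And>i. i \<in> A \<Longrightarrow> f i \<in> cyc_field p) \<Longrightarrow> \<sigma> (sum f A) = (\<Sum>i\<in>A. \<sigma> (f i))"
  by (induction A rule: finite_induct) (auto simp: g_0 g_add K_sum)
lemma g_pow: "x \<in> cyc_field p \<Longrightarrow> \<sigma> (x ^ n) = \<sigma> x ^ n"
  by (induction n) (auto simp: g_1 g_mult K_pow)
lemma g_zeta_root: "\<sigma> (zeta p) ^ p = 1"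
  using g_pow[OF K_zeta, of p] zeta_pow_p[OF p] g_1 by simp
lemma g_zeta_R: "\<sigma> (zeta p) \<in> cyc_int p"
  using root_in_R g_zeta_root by blast

end

lemma gg_norm: "\<sigma> \<in> gal_cyc p \<Longrightarrow> \<tau> \<in> gal_cyc p \<Longrightarrow> norm (\<sigma> (\<tau> (zeta p))) = 1"
proof -
  assume s: "\<sigma> \<in> gal_cyc p" and t: "\<tau> \<in> gal_cyc p"
  have "\<sigma> (\<tau> (zeta p)) ^ p = \<sigma> (\<tau> (zeta p) ^ p)"
    using g_pow[OF s g_maps[OF t K_zeta]] by simp
  also have "\<dots> = 1" using g_zeta_root[OF t] g_1[OF s] by simp
  finally have "norm (\<sigma> (\<tau> (zeta p))) ^ p = 1 ^ p" by (metis norm_power norm_one power_one)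
  then show ?thesis using p by (subst (asm) power_eq_iff_eq_base) auto
qed

end




definition PP :: "int \<Rightarrow> nat \<Rightarrow> nat \<Rightarrow> int" where
  "PP n q k = (\<Prod>j=0..<k. n - int j * int q)"

lemma PP_cong: "\<exists>d. PP n q k = n ^ k + int q * d"
proof (induction k)
  case 0 then show ?case by (simp add: PP_def)
next
  case (Suc k)
  then obtain d where d: "PP n q k = n ^ k + int q * d" by blast
  have "PP n q (Suc k) = PP n q k * (n - int k * int q)" by (simp add: PP_def)
  also have "\<dots> = n ^ Suc k + int q * (d * (n - int k * int q) - n ^ k * int k)"
    unfolding d by (simp add: algebra_simps)
  finally show ?case by blast
qed

lemma PP_dvd:
  assumes q: "prime q"
  shows "\<exists>e. fact k dvd int q ^ e * PP n q k"
proof -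
  define qi where "qi = int q"
  have qi: "prime qi" using q by (simp add: qi_def)
  have fk: "(fact k :: int) \<noteq> 0" by simp
  have nu: "\<not> is_unit qi" using qi not_prime_unit by blast
  obtain M where M: "(fact k :: int) = qi ^ multiplicity qi (fact k) * M" "\<not> qi dvd M"
    using multiplicity_decompose'[OF fk nu] by blast
  have "coprime qi M" using qi M(2) by (rule prime_imp_coprime)
  then obtain u where u: "[qi * u = 1] (mod M)" using cong_solve_coprime_int by blast
  define w where "w = u * n"
  have "[n - int j * qi = qi * (w - int j)] (mod M)" for j
  proof -
    have "[qi * u * n = 1 * n] (mod M)" using u by (rule cong_scalar_right)
    then have "[qi * u * n - int j * qi = n - int j * qi] (mod M)"
      by (intro cong_diff) auto
    then show ?thesis by (simp add: w_def algebra_simps cong_sym_eq)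
  qed
  then have c: "[PP n q k = (\<Prod>j=0..<k. qi * (w - int j))] (mod M)"
    unfolding PP_def qi_def[symmetric] by (intro cong_prod) auto
  have "(\<Prod>j=0..<k. qi * (w - int j)) = qi ^ k * (\<Prod>j=0..<k. w - int j)"
    by (simp add: prod.distrib)
  moreover have "(fact k :: int) dvd (\<Prod>j=0..<k. w - int j)"
    by (rule dvdI[OF gbinomial_int_mult_fact[of k w, symmetric]])
  moreover have "M dvd (fact k :: int)" using M(1) by (metis dvd_triv_right)
  ultimately have "M dvd (\<Prod>j=0..<k. qi * (w - int j))"
    by (metis dvd_trans dvd_mult)
  then have "M dvd PP n q k" using cong_dvd_iff[OF c] by blast
  then have "qi ^ multiplicity qi (fact k) * M dvd qi ^ multiplicity qi (fact k) * PP n q k"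
    by simp
  then show ?thesis using M(1) unfolding qi_def by metis
qed

lemma gch_PP:
  assumes "q > 0"
  shows "((of_int n / of_nat q :: complex) gchoose k) = of_int (PP n q k) / (fact k * of_nat q ^ k)"
proof -
  have "((of_int n / of_nat q :: complex) gchoose k) * fact k = (\<Prod>i=0..<k. of_int n / of_nat q - of_nat i)"
    by (rule gbinomial_mult_fact')
  then have "((of_int n / of_nat q :: complex) gchoose k) * fact k * of_nat q ^ k
      = (\<Prod>i=0..<k. of_nat q * (of_int n / of_nat q - of_nat i))"
    by (simp add: prod.distrib)
  also have "\<dots> = (\<Prod>i=0..<k. of_int (n - int i * int q))"
    using assms by (intro prod.cong) (simp_all add: field_simps)
  also have "\<dots> = of_int (PP n q k)" by (simp add: PP_def)
  finally show ?thesis using assms by (simp add: field_simps)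
qed

definition fac :: "complex \<Rightarrow> complex \<Rightarrow> complex fps" where
  "fac r y = Abs_fps (\<lambda>k. (r gchoose k) * y ^ k)"

context
  fixes p q :: nat assumes p: "p > 0" and q: "q > 0"
begin

definition HB :: "complex fps \<Rightarrow> complex \<Rightarrow> bool" where
  "HB f \<alpha> \<longleftrightarrow> \<alpha> \<in> cyc_int p \<and> (\<forall>k. \<exists>a\<in>cyc_int p. fps_nth f k = a / (fact k * of_nat q ^ k) \<and>
      (\<exists>b\<in>cyc_int p. a - \<alpha> ^ k = of_nat q * b))"

lemma R_of_nat: "of_nat k \<in> cyc_int p"
  using R_of_int[OF p, of "int k"] by simp

lemma HB_one: "HB 1 0"
  unfolding HB_def
proof (intro conjI allI)
  show "0 \<in> cyc_int p" using R_of_int[OF p, of 0] by simp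
  fix k
  have z: "0 \<in> cyc_int p" and o: "1 \<in> cyc_int p" using R_of_nat[of 0] R_of_nat[of 1] by simp_all
  show "\<exists>a\<in>cyc_int p. fps_nth 1 k = a / (fact k * of_nat q ^ k) \<and> (\<exists>b\<in>cyc_int p. a - 0 ^ k = of_nat q * b)"
  proof (cases "k = 0")
    case True
    then show ?thesis using z o by (intro bexI[of _ 1]) auto
  next
    case False
    then show ?thesis using z o by (intro bexI[of _ 0]) (auto simp: power_0_left)
  qed
qed

lemma HB_mult:
  assumes f: "HB f \<alpha>" and g: "HB g \<beta>"
  shows "HB (f * g) (\<alpha> + \<beta>)"
proof -
  have "\<forall>k. \<exists>a u. a \<in> cyc_int p \<and> u \<in> cyc_int p \<and> fps_nth f k = a / (fact k * of_nat q ^ k) \<and> a - \<alpha> ^ k = of_nat q * u"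
    using f unfolding HB_def by blast
  then obtain A U where AU: "\<And>k. A k \<in> cyc_int p" "\<And>k. U k \<in> cyc_int p"
    "\<And>k. fps_nth f k = A k / (fact k * of_nat q ^ k)" "\<And>k. A k - \<alpha> ^ k = of_nat q * U k"
    by metis
  have "\<forall>k. \<exists>a u. a \<in> cyc_int p \<and> u \<in> cyc_int p \<and> fps_nth g k = a / (fact k * of_nat q ^ k) \<and> a - \<beta> ^ k = of_nat q * u"
    using g unfolding HB_def by blast
  then obtain B V where BV: "\<And>k. B k \<in> cyc_int p" "\<And>k. V k \<in> cyc_int p"
    "\<And>k. fps_nth g k = B k / (fact k * of_nat q ^ k)" "\<And>k. B k - \<beta> ^ k = of_nat q * V k"
    by metis
  have al: "\<alpha> \<in> cyc_int p" and be: "\<beta> \<in> cyc_int p" using f g unfolding HB_def by auto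
  show ?thesis unfolding HB_def
  proof (intro conjI allI)
    show "\<alpha> + \<beta> \<in> cyc_int p" using al be by (rule R_add[OF p])
    fix k
    define c where "c = (\<Sum>i=0..k. of_nat (k choose i) * A i * B (k - i))"
    define d where "d = (\<Sum>i=0..k. of_nat (k choose i) * (U i * \<beta> ^ (k - i) + \<alpha> ^ i * V (k - i) + of_nat q * U i * V (k - i)))"
    have cR: "c \<in> cyc_int p" unfolding c_def
      by (intro R_sum[OF p] R_mult[OF p] R_of_nat AU BV) auto
    have dR: "d \<in> cyc_int p" unfolding d_def
      by (intro R_sum[OF p] R_mult[OF p] R_add[OF p] R_of_nat AU BV R_pow[OF p] al be) auto
    have "fps_nth (f * g) k = (\<Sum>i=0..k. A i / (fact i * of_nat q ^ i) * (B (k - i) / (fact (k - i) * of_nat q ^ (k - i))))"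
      by (simp add: fps_mult_nth AU BV)
    also have "\<dots> = (\<Sum>i=0..k. of_nat (k choose i) * A i * B (k - i) / (fact k * of_nat q ^ k))"
    proof (intro sum.cong refl)
      fix i assume "i \<in> {0..k}"
      then have i: "i \<le> k" by simp
      have fk: "(fact k :: complex) = fact i * fact (k - i) * of_nat (k choose i)"
        using binomial_fact_lemma[OF i] by (metis of_nat_fact of_nat_mult)
      have qk: "(of_nat q :: complex) ^ k = of_nat q ^ i * of_nat q ^ (k - i)"
        using i by (simp flip: power_add)
      show "A i / (fact i * of_nat q ^ i) * (B (k - i) / (fact (k - i) * of_nat q ^ (k - i))) =
         of_nat (k choose i) * A i * B (k - i) / (fact k * of_nat q ^ k)"
        unfolding fk qk using q i by (simp add: field_simps binomial_eq_0_iff)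
    qed
    also have "\<dots> = c / (fact k * of_nat q ^ k)" unfolding c_def by (simp add: sum_divide_distrib)
    finally have e1: "fps_nth (f * g) k = c / (fact k * of_nat q ^ k)" .
    have "(\<alpha> + \<beta>) ^ k = (\<Sum>i=0..k. of_nat (k choose i) * \<alpha> ^ i * \<beta> ^ (k - i))"
      by (simp add: binomial_ring atLeast0AtMost)
    then have "c - (\<alpha> + \<beta>) ^ k = (\<Sum>i=0..k. of_nat (k choose i) * (A i * B (k - i) - \<alpha> ^ i * \<beta> ^ (k - i)))"
      unfolding c_def by (simp add: sum_subtractf algebra_simps)
    also have "\<dots> = of_nat q * d" unfolding d_def sum_distrib_left
    proof (intro sum.cong refl)
      fix i
      have "A i = \<alpha> ^ i + of_nat q * U i" "B (k - i) = \<beta> ^ (k - i) + of_nat q * V (k - i)"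
        using AU(4)[of i] BV(4)[of "k - i"] by (simp_all add: algebra_simps)
      then show "of_nat (k choose i) * (A i * B (k - i) - \<alpha> ^ i * \<beta> ^ (k - i)) =
          of_nat q * (of_nat (k choose i) * (U i * \<beta> ^ (k - i) + \<alpha> ^ i * V (k - i) + of_nat q * U i * V (k - i)))"
        by (simp add: algebra_simps)
    qed
    finally show "\<exists>a\<in>cyc_int p. fps_nth (f * g) k = a / (fact k * of_nat q ^ k) \<and>
        (\<exists>b\<in>cyc_int p. a - (\<alpha> + \<beta>) ^ k = of_nat q * b)"
      using e1 cR dR by blast
  qed
qed

lemma HB_fac:
  assumes y: "y \<in> cyc_int p"
  shows "HB (fac (of_int n / of_nat q) y) (of_int n * y)"
  unfolding HB_def
proof (intro conjI allI)
  show "of_int n * y \<in> cyc_int p" by (intro R_mult[OF p] R_of_int[OF p] y)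
  fix k
  obtain d where d: "PP n q k = n ^ k + int q * d" using PP_cong by blast
  have "fps_nth (fac (of_int n / of_nat q) y) k = (of_int (PP n q k) * y ^ k) / (fact k * of_nat q ^ k)"
    unfolding fac_def gch_PP[OF q] by simp
  moreover have "of_int (PP n q k) * y ^ k - (of_int n * y) ^ k = of_nat q * (of_int d * y ^ k)"
    unfolding d by (simp add: algebra_simps power_mult_distrib)
  moreover have "of_int (PP n q k) * y ^ k \<in> cyc_int p" "of_int d * y ^ k \<in> cyc_int p"
    by (intro R_mult[OF p] R_of_int[OF p] R_pow[OF p] y)+
  ultimately show "\<exists>a\<in>cyc_int p. fps_nth (fac (of_int n / of_nat q) y) k = a / (fact k * of_nat q ^ k) \<and>
         (\<exists>b\<in>cyc_int p. a - (of_int n * y) ^ k = of_nat q * b)" by blast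
qed

lemma HB_prod:
  assumes "finite S" "\<And>\<tau>. \<tau> \<in> S \<Longrightarrow> y \<tau> \<in> cyc_int p"
  shows "HB (\<Prod>\<tau>\<in>S. fac (of_int (n \<tau>) / of_nat q) (y \<tau>)) (\<Sum>\<tau>\<in>S. of_int (n \<tau>) * y \<tau>)"
  using assms
proof (induction S rule: finite_induct)
  case empty then show ?case using HB_one by simp
next
  case (insert x F)
  then show ?case by (simp add: HB_mult HB_fac)
qed

definition HA :: "complex \<Rightarrow> bool" where
  "HA x \<longleftrightarrow> (\<exists>a\<in>cyc_int p. \<exists>s::nat. x = a / of_nat q ^ s)"

lemma HA_add: "HA x \<Longrightarrow> HA y \<Longrightarrow> HA (x + y)"
proof -
  assume "HA x" "HA y"
  then obtain a s b t where ab: "a \<in> cyc_int p" "b \<in> cyc_int p" "x = a / of_nat q ^ s" "y = b / of_nat q ^ t"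
    unfolding HA_def by blast
  have "x + y = (a * of_nat q ^ t + b * of_nat q ^ s) / of_nat q ^ (s + t)"
    using q unfolding ab(3,4) by (simp add: field_simps power_add)
  moreover have "a * of_nat q ^ t + b * of_nat q ^ s \<in> cyc_int p"
    by (intro R_add[OF p] R_mult[OF p] R_pow[OF p] R_of_nat ab)
  ultimately show ?thesis unfolding HA_def by blast
qed

lemma HA_mult: "HA x \<Longrightarrow> HA y \<Longrightarrow> HA (x * y)"
proof -
  assume "HA x" "HA y"
  then obtain a s b t where ab: "a \<in> cyc_int p" "b \<in> cyc_int p" "x = a / of_nat q ^ s" "y = b / of_nat q ^ t"
    unfolding HA_def by blast
  have "x * y = (a * b) / of_nat q ^ (s + t)"
    using q unfolding ab(3,4) by (simp add: field_simps power_add)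
  moreover have "a * b \<in> cyc_int p" by (intro R_mult[OF p] ab)
  ultimately show ?thesis unfolding HA_def by blast
qed

lemma HA_R: "a \<in> cyc_int p \<Longrightarrow> HA a"
  unfolding HA_def by (rule bexI[of _ a]) (auto intro: exI[of _ 0])

lemma HA_sum: "finite A \<Longrightarrow> (\<And>i. i \<in> A \<Longrightarrow> HA (f i)) \<Longrightarrow> HA (sum f A)"
  by (induction A rule: finite_induct) (auto intro: HA_add HA_R R_of_nat[of 0, simplified])

lemma HA_fac:
  assumes y: "y \<in> cyc_int p" and qp: "prime q"
  shows "HA (fps_nth (fac (of_int n / of_nat q) y) k)"
proof -
  obtain e where "fact k dvd int q ^ e * PP n q k" using PP_dvd[OF qp] by blast
  then obtain w where w: "int q ^ e * PP n q k = fact k * w" by (elim dvdE)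
  have "(of_int (int q ^ e * PP n q k) :: complex) = fact k * of_int w"
    unfolding w by simp
  then have w': "of_nat q ^ e * of_int (PP n q k) = (fact k * of_int w :: complex)" by simp
  have "fps_nth (fac (of_int n / of_nat q) y) k = of_int (PP n q k) / (fact k * of_nat q ^ k) * y ^ k"
    unfolding fac_def gch_PP[OF q] by simp
  also have "\<dots> = (of_nat q ^ e * of_int (PP n q k)) / (fact k * of_nat q ^ (e + k)) * y ^ k"
    using q by (simp add: field_simps power_add)
  also have "\<dots> = (of_int w * y ^ k) / of_nat q ^ (e + k)"
    unfolding w' by (simp add: field_simps)
  finally show ?thesis unfolding HA_def
    by (intro bexI[of _ "of_int w * y ^ k"] exI[of _ "e + k"] R_mult[OF p] R_of_int[OF p] R_pow[OF p] y)
qed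

lemma HA_prod:
  assumes "finite S" "\<And>\<tau>. \<tau> \<in> S \<Longrightarrow> y \<tau> \<in> cyc_int p" and qp: "prime q"
  shows "HA (fps_nth (\<Prod>\<tau>\<in>S. fac (of_int (n \<tau>) / of_nat q) (y \<tau>)) k)"
  using assms(1,2)
proof (induction S arbitrary: k rule: finite_induct)
  case empty then show ?case by (auto intro: HA_R R_of_nat[of 0, simplified] R_of_nat[of 1, simplified])
next
  case (insert x F)
  then show ?case
    by (simp add: fps_mult_nth) (intro HA_sum HA_mult HA_fac qp; simp)
qed

end




definition G :: "real \<Rightarrow> real fps" where
  "G R = Abs_fps (\<lambda>i. ((- R) gchoose i) * (-1) ^ i)"

lemma G_poch: "fps_nth (G R) i = pochhammer R i / fact i"
proof -
  have "fps_nth (G R) i = (-1) ^ i * pochhammer R i / fact i * (-1) ^ i"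
    unfolding G_def by (simp add: gbinomial_pochhammer)
  also have "\<dots> = ((-1) ^ i * (-1) ^ i) * pochhammer R i / fact i" by simp
  also have "(-1::real) ^ i * (-1) ^ i = 1" by (simp flip: power_add)
  finally show ?thesis by simp
qed

lemma poch_nonneg: "(x::real) \<ge> 0 \<Longrightarrow> pochhammer x n \<ge> 0"
  unfolding pochhammer_prod by (intro prod_nonneg) auto

lemma G_nonneg: "R \<ge> 0 \<Longrightarrow> fps_nth (G R) i \<ge> 0"
  unfolding G_poch by (intro divide_nonneg_pos poch_nonneg) auto

lemma G_mult: "G a * G b = G (a + b)"
proof (rule fps_ext)
  fix n
  have "fps_nth (G a * G b) n = (\<Sum>i=0..n. ((- a) gchoose i) * ((- b) gchoose (n - i)) * (-1) ^ n)"
    unfolding fps_mult_nth G_def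
    by (intro sum.cong refl) (simp add: power_add[symmetric])
  also have "\<dots> = ((- a + - b) gchoose n) * (-1) ^ n"
    by (simp add: sum_distrib_right[symmetric] gbinomial_Vandermonde)
  finally show "fps_nth (G a * G b) n = fps_nth (G (a + b)) n" unfolding G_def by simp
qed

lemma G_0: "G 0 = 1"
  by (rule fps_ext) (simp add: G_def gbinomial_0_left)

lemma gch_real_bound: "norm ((of_real r gchoose i :: complex)) \<le> fps_nth (G \<bar>r\<bar>) i"
proof -
  have "(of_real r gchoose i :: complex) = of_real (r gchoose i)"
    by (simp add: gbinomial_prod_rev)
  then have "norm ((of_real r gchoose i :: complex)) = \<bar>r gchoose i\<bar>" by simp
  also have "\<bar>r gchoose i\<bar> = \<bar>(\<Prod>j=0..<i. r - of_nat j)\<bar> / fact i"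
    by (simp add: gbinomial_prod_rev)
  also have "\<dots> \<le> (\<Prod>j=0..<i. \<bar>r\<bar> + of_nat j) / fact i"
    unfolding abs_prod
    by (intro divide_right_mono prod_mono) auto
  also have "\<dots> = fps_nth (G \<bar>r\<bar>) i" unfolding G_poch pochhammer_prod ..
  finally show ?thesis .
qed

lemma fac_bound:
  assumes "norm z = 1"
  shows "norm (fps_nth (fac (of_real r) z) i) \<le> fps_nth (G \<bar>r\<bar>) i"
  using gch_real_bound[of r i] assms by (simp add: fac_def norm_mult norm_power)

lemma maj_mult:
  fixes A C :: "complex fps" and B D :: "real fps"
  assumes "\<And>i. norm (fps_nth A i) \<le> fps_nth B i" "\<And>i. norm (fps_nth C i) \<le> fps_nth D i"
  shows "norm (fps_nth (A * C) n) \<le> fps_nth (B * D) n"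
proof -
  have "norm (fps_nth (A * C) n) \<le> (\<Sum>i=0..n. norm (fps_nth A i * fps_nth C (n - i)))"
    unfolding fps_mult_nth by (rule norm_sum)
  also have "\<dots> \<le> (\<Sum>i=0..n. fps_nth B i * fps_nth D (n - i))"
  proof (rule sum_mono)
    fix i
    have "norm (fps_nth A i * fps_nth C (n - i)) = norm (fps_nth A i) * norm (fps_nth C (n - i))"
      by (rule norm_mult)
    also have "\<dots> \<le> fps_nth B i * fps_nth D (n - i)"
      by (intro mult_mono assms) (auto intro: order_trans[OF norm_ge_zero assms(1)])
    finally show "norm (fps_nth A i * fps_nth C (n - i)) \<le> fps_nth B i * fps_nth D (n - i)" .
  qed
  also have "\<dots> = fps_nth (B * D) n" by (simp add: fps_mult_nth)
  finally show ?thesis .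
qed

lemma maj_prod:
  assumes "finite S" "\<And>\<tau>. \<tau> \<in> S \<Longrightarrow> norm (z \<tau>) = 1"
  shows "norm (fps_nth (\<Prod>\<tau>\<in>S. fac (of_real (r \<tau>)) (z \<tau>)) n) \<le> fps_nth (G (\<Sum>\<tau>\<in>S. \<bar>r \<tau>\<bar>)) n"
  using assms
proof (induction S arbitrary: n rule: finite_induct)
  case empty then show ?case by (simp add: G_0)
next
  case (insert x F)
  have "norm (fps_nth (fac (of_real (r x)) (z x) * (\<Prod>\<tau>\<in>F. fac (of_real (r \<tau>)) (z \<tau>))) n)
      \<le> fps_nth (G \<bar>r x\<bar> * G (\<Sum>\<tau>\<in>F. \<bar>r \<tau>\<bar>)) n"
    by (rule maj_mult) (use insert in \<open>auto intro: fac_bound\<close>)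
  then show ?case using insert by (simp add: G_mult)
qed

lemma G_sums: "R \<ge> 0 \<Longrightarrow> 0 \<le> x \<Longrightarrow> x < 1 \<Longrightarrow> (\<lambda>i. fps_nth (G R) i * x ^ i) sums ((1 - x) powr (- R))"
proof -
  assume "R \<ge> 0" "0 \<le> x" "x < 1"
  then have "(\<lambda>n. ((- R) gchoose n) * (- x) ^ n) sums (1 + - x) powr (- R)"
    by (intro gen_binomial_real) auto
  moreover have "((- R) gchoose n) * (- x) ^ n = fps_nth (G R) n * x ^ n" for n
    unfolding G_def by (simp add: power_minus[of x n])
  ultimately show ?thesis by simp
qed

lemma fact_add_ge: "real (fact m) * real (fact n) \<le> fact (m + n)"
proof -
  have "fact m * fact (m + n - m) * ((m + n) choose m) = (fact (m + n) :: nat)"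
    by (rule binomial_fact_lemma) simp
  then have "fact m * fact n * ((m + n) choose m) = (fact (m + n) :: nat)" by simp
  moreover have "(m + n) choose m \<ge> 1" by (simp add: Suc_leI)
  ultimately have "fact m * fact n \<le> (fact (m + n) :: nat)"
    by (metis mult.right_neutral mult_le_mono2)
  then show ?thesis by (metis of_nat_fact of_nat_le_iff of_nat_mult)
qed

lemma G_tail: "R \<ge> 0 \<Longrightarrow> fps_nth (G R) (j + m) \<le> fps_nth (G R) m * fps_nth (G (R + of_nat m)) j"
proof -
  assume R: "R \<ge> 0"
  have pp: "pochhammer R (m + j) = pochhammer R m * pochhammer (R + of_nat m) j"
    by (rule pochhammer_product')
  have "fps_nth (G R) (j + m) = pochhammer R m * pochhammer (R + of_nat m) j / fact (m + j)"
    unfolding G_poch pp[symmetric] by (simp only: add.commute)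
  also have "\<dots> \<le> pochhammer R m * pochhammer (R + of_nat m) j / (fact m * fact j)"
    using R fact_add_ge[of m j]
    by (intro divide_left_mono mult_nonneg_nonneg poch_nonneg mult_pos_pos) auto
  also have "\<dots> = fps_nth (G R) m * fps_nth (G (R + of_nat m)) j"
    unfolding G_poch by simp
  finally show ?thesis .
qed

lemma series_bound:
  fixes a :: "nat \<Rightarrow> complex" and t :: complex
  assumes R: "R \<ge> 0" and a: "\<And>i. norm (a i) \<le> fps_nth (G R) i" and t: "norm t < 1"
  shows "summable (\<lambda>i. a i * t ^ i)"
    and "norm ((\<Sum>i. a i * t ^ i) - (\<Sum>i\<le>k. a i * t ^ i))
          \<le> fps_nth (G R) (k + 1) * norm t ^ (k + 1) / (1 - norm t) powr (R + real k + 1)"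
proof -
  define x where "x = norm t"
  have x: "0 \<le> x" "x < 1" using t by (auto simp: x_def)
  define b where "b i = fps_nth (G R) i * x ^ i" for i
  have sb: "summable b" unfolding b_def using G_sums[OF R x] by (rule sums_summable)
  have nb: "norm (a i * t ^ i) \<le> b i" for i
    unfolding b_def x_def norm_mult norm_power
    by (intro mult_right_mono a) auto
  have sn: "summable (\<lambda>i. norm (a i * t ^ i))"
    by (rule summable_comparison_test'[OF sb]) (use nb in auto)
  show s: "summable (\<lambda>i. a i * t ^ i)"
    by (rule summable_comparison_test'[OF sb]) (use nb in auto)
  define f where "f i = a i * t ^ i" for i
  have sn': "summable (\<lambda>i. norm (f i))" using sn by (simp add: f_def)
  have sn'': "summable (\<lambda>j. norm (f (j + Suc k)))" by (rule summable_ignore_initial_segment[OF sn'])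
  have "(\<Sum>i. f i) = (\<Sum>j. f (j + Suc k)) + (\<Sum>i<Suc k. f i)"
    using s unfolding f_def by (rule suminf_split_initial_segment)
  then have "(\<Sum>i. f i) - (\<Sum>i\<le>k. f i) = (\<Sum>j. f (j + Suc k))"
    by (simp add: lessThan_Suc_atMost)
  then have "norm ((\<Sum>i. f i) - (\<Sum>i\<le>k. f i)) = norm (\<Sum>j. f (j + Suc k))" by simp
  also have "\<dots> \<le> (\<Sum>j. norm (f (j + Suc k)))"
    by (rule summable_norm[OF sn''])
  also have "\<dots> \<le> (\<Sum>j. fps_nth (G R) (Suc k) * x ^ Suc k * (fps_nth (G (R + of_nat (Suc k))) j * x ^ j))"
  proof (rule suminf_le)
    fix j
    have "norm (f (j + Suc k)) \<le> b (j + Suc k)" using nb unfolding f_def .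
    also have "\<dots> \<le> fps_nth (G R) (Suc k) * fps_nth (G (R + of_nat (Suc k))) j * x ^ (j + Suc k)"
      unfolding b_def using x by (intro mult_right_mono G_tail R) auto
    also have "\<dots> = fps_nth (G R) (Suc k) * x ^ Suc k * (fps_nth (G (R + of_nat (Suc k))) j * x ^ j)"
      by (simp add: power_add mult_ac)
    finally show "norm (f (j + Suc k)) \<le> \<dots>" .
  next
    show "summable (\<lambda>j. norm (f (j + Suc k)))" by (rule sn'')
  next
    show "summable (\<lambda>j. fps_nth (G R) (Suc k) * x ^ Suc k * (fps_nth (G (R + of_nat (Suc k))) j * x ^ j))"
      using G_sums[of "R + of_nat (Suc k)" x] R x by (intro summable_mult sums_summable) auto
  qed
  also have "\<dots> = fps_nth (G R) (Suc k) * x ^ Suc k * (1 - x) powr (- (R + of_nat (Suc k)))"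
    using G_sums[of "R + of_nat (Suc k)" x] R x
    by (subst suminf_mult) (auto simp: sums_iff)
  also have "(1 - x) powr (- (R + of_nat (Suc k))) = 1 / (1 - x) powr (R + real k + 1)"
    by (subst powr_minus_divide) (simp add: add_ac)
  also have "fps_nth (G R) (Suc k) * x ^ Suc k * (1 / (1 - x) powr (R + real k + 1))
      = fps_nth (G R) (k + 1) * x ^ (k + 1) / (1 - x) powr (R + real k + 1)"
    by simp
  finally show "norm ((\<Sum>i. a i * t ^ i) - (\<Sum>i\<le>k. a i * t ^ i))
          \<le> fps_nth (G R) (k + 1) * norm t ^ (k + 1) / (1 - norm t) powr (R + real k + 1)"
    unfolding f_def x_def .
qed




lemma conj_nth: "fps_nth (fps_conj \<sigma> F) k = \<sigma> (fps_nth F k)"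
  by (simp add: fps_conj_def)

context
  fixes p q :: nat assumes p: "p > 0" and q: "q > 0"
begin

definition inK :: "complex fps \<Rightarrow> bool" where
  "inK f \<longleftrightarrow> (\<forall>k. fps_nth f k \<in> cyc_field p)"

lemma inK_mult: "inK A \<Longrightarrow> inK B \<Longrightarrow> inK (A * B)"
  unfolding inK_def
proof (intro allI)
  fix k assume A: "\<forall>k. fps_nth A k \<in> cyc_field p" and B: "\<forall>k. fps_nth B k \<in> cyc_field p"
  show "fps_nth (A * B) k \<in> cyc_field p" unfolding fps_mult_nth
    by (intro K_sum[OF p] K_mult[OF p] finite_atLeastAtMost A[rule_format] B[rule_format])
qed

lemma inK_one: "inK 1"
  unfolding inK_def using K_rat[OF p, of 0] K_rat[OF p, of 1] by auto

lemma gch_rat: "((of_int n / of_nat q :: complex) gchoose k) \<in> \<rat>"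
  unfolding gch_PP[OF q]
proof (intro Rats_divide Rats_mult Rats_power)
  show "(fact k :: complex) \<in> \<rat>" by (metis Rats_of_nat of_nat_fact)
qed auto

lemma inK_fac: "y \<in> cyc_field p \<Longrightarrow> inK (fac (of_int n / of_nat q) y)"
  unfolding inK_def fac_def fps_nth_Abs_fps
  by (intro allI K_mult[OF p] K_rat[OF p gch_rat] K_pow[OF p])

lemma inK_prod: "finite S \<Longrightarrow> (\<And>\<tau>. \<tau> \<in> S \<Longrightarrow> y \<tau> \<in> cyc_field p) \<Longrightarrow>
    inK (\<Prod>\<tau>\<in>S. fac (of_int (n \<tau>) / of_nat q) (y \<tau>))"
proof (induction S rule: finite_induct)
  case empty then show ?case using inK_one by simp
next
  case (insert x F)
  have "inK (fac (of_int (n x) / of_nat q) (y x) * (\<Prod>\<tau>\<in>F. fac (of_int (n \<tau>) / of_nat q) (y \<tau>)))"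
    by (intro inK_mult inK_fac insert.prems insert.IH) auto
  then show ?case using insert.hyps by simp
qed

context
  fixes \<sigma> assumes \<sigma>: "\<sigma> \<in> gal_cyc p"
begin

lemma conj_mult: "inK A \<Longrightarrow> inK B \<Longrightarrow> fps_conj \<sigma> (A * B) = fps_conj \<sigma> A * fps_conj \<sigma> B"
proof -
  assume A: "inK A" and B: "inK B"
  show ?thesis
  proof (rule fps_ext)
    fix k
    have "fps_nth (fps_conj \<sigma> (A * B)) k = \<sigma> (\<Sum>i=0..k. fps_nth A i * fps_nth B (k - i))"
      by (simp add: conj_nth fps_mult_nth)
    also have "\<dots> = (\<Sum>i=0..k. \<sigma> (fps_nth A i * fps_nth B (k - i)))"
      using A B unfolding inK_def by (intro g_sum[OF p \<sigma>] K_mult[OF p]) auto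
    also have "\<dots> = (\<Sum>i=0..k. \<sigma> (fps_nth A i) * \<sigma> (fps_nth B (k - i)))"
      using A B unfolding inK_def by (intro sum.cong refl g_mult[OF p \<sigma>]) auto
    also have "\<dots> = fps_nth (fps_conj \<sigma> A * fps_conj \<sigma> B) k"
      by (simp add: conj_nth fps_mult_nth)
    finally show "fps_nth (fps_conj \<sigma> (A * B)) k = fps_nth (fps_conj \<sigma> A * fps_conj \<sigma> B) k" .
  qed
qed

lemma conj_one: "fps_conj \<sigma> 1 = 1"
  by (rule fps_ext) (simp add: conj_nth g_1[OF p \<sigma>] g_0[OF p \<sigma>])

lemma conj_fac: "y \<in> cyc_field p \<Longrightarrow>
    fps_conj \<sigma> (fac (of_int n / of_nat q) y) = fac (of_int n / of_nat q) (\<sigma> y)"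
proof -
  assume y: "y \<in> cyc_field p"
  show ?thesis
  proof (rule fps_ext)
    fix k
    have "\<sigma> (((of_int n / of_nat q :: complex) gchoose k) * y ^ k)
        = \<sigma> ((of_int n / of_nat q :: complex) gchoose k) * \<sigma> (y ^ k)"
      by (intro g_mult[OF p \<sigma>] K_rat[OF p gch_rat] K_pow[OF p y])
    also have "\<dots> = ((of_int n / of_nat q :: complex) gchoose k) * \<sigma> y ^ k"
      using g_rat[OF p \<sigma> gch_rat] g_pow[OF p \<sigma> y] by simp
    finally show "fps_nth (fps_conj \<sigma> (fac (of_int n / of_nat q) y)) k = fps_nth (fac (of_int n / of_nat q) (\<sigma> y)) k"
      by (simp add: conj_nth fac_def)
  qed
qed

lemma conj_prod: "finite S \<Longrightarrow> (\<And>\<tau>. \<tau> \<in> S \<Longrightarrow> y \<tau> \<in> cyc_field p) \<Longrightarrow>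
    fps_conj \<sigma> (\<Prod>\<tau>\<in>S. fac (of_int (n \<tau>) / of_nat q) (y \<tau>))
    = (\<Prod>\<tau>\<in>S. fac (of_int (n \<tau>) / of_nat q) (\<sigma> (y \<tau>)))"
proof (induction S rule: finite_induct)
  case empty then show ?case by (simp add: conj_one)
next
  case (insert x F)
  have yx: "y x \<in> cyc_field p" using insert.prems by simp
  have i2: "inK (\<Prod>\<tau>\<in>F. fac (of_int (n \<tau>) / of_nat q) (y \<tau>))"
    by (intro inK_prod insert.hyps insert.prems) auto
  have "fps_conj \<sigma> (\<Prod>\<tau>\<in>insert x F. fac (of_int (n \<tau>) / of_nat q) (y \<tau>))
      = fps_conj \<sigma> (fac (of_int (n x) / of_nat q) (y x) * (\<Prod>\<tau>\<in>F. fac (of_int (n \<tau>) / of_nat q) (y \<tau>)))"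
    using insert.hyps by simp
  also have "\<dots> = fps_conj \<sigma> (fac (of_int (n x) / of_nat q) (y x)) * fps_conj \<sigma> (\<Prod>\<tau>\<in>F. fac (of_int (n \<tau>) / of_nat q) (y \<tau>))"
    by (rule conj_mult[OF inK_fac[OF yx] i2])
  also have "\<dots> = fac (of_int (n x) / of_nat q) (\<sigma> (y x)) * (\<Prod>\<tau>\<in>F. fac (of_int (n \<tau>) / of_nat q) (\<sigma> (y \<tau>)))"
    using insert.IH insert.prems conj_fac[OF yx] by simp
  also have "\<dots> = (\<Prod>\<tau>\<in>insert x F. fac (of_int (n \<tau>) / of_nat q) (\<sigma> (y \<tau>)))"
    using insert.hyps by simp
  finally show ?case .
qed

end
end



theorem proposition3:
  fixes p q :: nat and n :: "(complex \<Rightarrow> complex) \<Rightarrow> int"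
  assumes "prime p" "prime q" "odd p" "odd q" "p \<noteq> q"
  defines "F \<equiv> F_series p q n"
  shows "(\<forall>k. \<exists>a\<in>cyc_int p. \<exists>s::nat. fps_nth F k = a / of_nat q ^ s)
    \<and> (\<forall>k. \<exists>a\<in>cyc_int p. fps_nth F k = a / (fact k * of_nat q ^ k) \<and>
            (\<exists>b\<in>cyc_int p. a - (- (\<Sum>\<tau>\<in>gal_cyc p. of_int (n \<tau>) * \<tau> (zeta p))) ^ k
                              = of_nat q * b))
    \<and> (\<forall>\<sigma>\<in>gal_cyc p. \<forall>t. norm t < 1 \<longrightarrow>
            summable (\<lambda>k. fps_nth (fps_conj \<sigma> F) k * t ^ k))
    \<and> ((\<forall>\<tau>\<in>gal_cyc p. 0 \<le> n \<tau> \<and> n \<tau> \<le> int q) \<longrightarrow>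
          (\<forall>\<sigma>\<in>gal_cyc p. \<forall>t. \<forall>k::nat. norm t < 1 \<longrightarrow>
            norm ((\<Sum>i. fps_nth (fps_conj \<sigma> F) i * t ^ i)
                  - (\<Sum>i\<le>k. fps_nth (fps_conj \<sigma> F) i * t ^ i))
            \<le> \<bar>(- ((\<Sum>\<tau>\<in>gal_cyc p. real_of_int (n \<tau>)) / real q)) gchoose (k + 1)\<bar>
               * norm t ^ (k + 1)
               / (1 - norm t) powr ((\<Sum>\<tau>\<in>gal_cyc p. real_of_int (n \<tau>)) / real q + real k + 1)))"
proof -
  have p: "p > 0" using assms(1) prime_gt_0_nat by blast
  have q: "q > 0" using assms(2) prime_gt_0_nat by blast
  define S where "S = (if finite (gal_cyc p) then gal_cyc p else {})"
  have fS: "finite S" and SG: "S \<subseteq> gal_cyc p" unfolding S_def by auto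
  have sumC: "(\<Sum>\<tau>\<in>gal_cyc p. f \<tau>) = (\<Sum>\<tau>\<in>S. f \<tau>)" for f :: "_ \<Rightarrow> complex"
    unfolding S_def by simp
  have sumR: "(\<Sum>\<tau>\<in>gal_cyc p. f \<tau>) = (\<Sum>\<tau>\<in>S. f \<tau>)" for f :: "_ \<Rightarrow> real"
    unfolding S_def by simp
  have Fe: "F = (\<Prod>\<tau>\<in>S. fac (of_int (n \<tau>) / of_nat q) (- \<tau> (zeta p)))"
  proof (cases "finite (gal_cyc p)")
    case True then show ?thesis unfolding F_def F_series_def fac_def S_def by simp
  next
    case False then show ?thesis unfolding F_def F_series_def S_def by simp
  qed
  have yR: "- \<tau> (zeta p) \<in> cyc_int p" if "\<tau> \<in> S" for \<tau>
    using that SG by (intro R_neg[OF p] g_zeta_R[OF p]) auto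
  have yK: "- \<tau> (zeta p) \<in> cyc_field p" if "\<tau> \<in> S" for \<tau>
    using yR[OF that] by (rule R_sub_K[OF p])
  have A: "\<forall>k. \<exists>a\<in>cyc_int p. \<exists>s::nat. fps_nth F k = a / of_nat q ^ s"
  proof
    fix k
    have "HA p q (fps_nth F k)" unfolding Fe by (rule HA_prod[OF p q fS yR assms(2)])
    then show "\<exists>a\<in>cyc_int p. \<exists>s::nat. fps_nth F k = a / of_nat q ^ s" unfolding HA_def[OF p q] .
  qed
  have "(\<Sum>\<tau>\<in>S. of_int (n \<tau>) * - \<tau> (zeta p)) = - (\<Sum>\<tau>\<in>gal_cyc p. of_int (n \<tau>) * \<tau> (zeta p))"
    unfolding sumC by (simp add: sum_negf)
  moreover have "HB p q F (\<Sum>\<tau>\<in>S. of_int (n \<tau>) * - \<tau> (zeta p))"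
    unfolding Fe by (rule HB_prod[OF p q fS yR])
  ultimately have hb: "HB p q F (- (\<Sum>\<tau>\<in>gal_cyc p. of_int (n \<tau>) * \<tau> (zeta p)))" by simp
  have B: "\<forall>k. \<exists>a\<in>cyc_int p. fps_nth F k = a / (fact k * of_nat q ^ k) \<and>
            (\<exists>b\<in>cyc_int p. a - (- (\<Sum>\<tau>\<in>gal_cyc p. of_int (n \<tau>) * \<tau> (zeta p))) ^ k
                              = of_nat q * b)"
    using hb unfolding HB_def[OF p q] by (elim conjE)
  define rr where "rr \<tau> = real_of_int (n \<tau>) / real q" for \<tau>
  define R where "R = (\<Sum>\<tau>\<in>S. \<bar>rr \<tau>\<bar>)"
  have R0: "R \<ge> 0" unfolding R_def by (intro sum_nonneg) auto
  have maj: "norm (fps_nth (fps_conj \<sigma> F) i) \<le> fps_nth (G R) i" if \<sigma>: "\<sigma> \<in> gal_cyc p" for \<sigma> i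
  proof -
    have "fps_conj \<sigma> F = (\<Prod>\<tau>\<in>S. fac (of_int (n \<tau>) / of_nat q) (\<sigma> (- \<tau> (zeta p))))"
      unfolding Fe by (rule conj_prod[OF p q \<sigma> fS yK])
    also have "\<dots> = (\<Prod>\<tau>\<in>S. fac (of_real (rr \<tau>)) (- \<sigma> (\<tau> (zeta p))))"
    proof (intro prod.cong refl)
      fix \<tau> assume t: "\<tau> \<in> S"
      have "\<sigma> (- \<tau> (zeta p)) = - \<sigma> (\<tau> (zeta p))"
      proof -
        have "\<tau> \<in> gal_cyc p" using t SG by blast
        then have "\<tau> (zeta p) \<in> cyc_field p" by (rule g_maps[OF p _ K_zeta[OF p]])
        then show ?thesis by (rule g_neg[OF p \<sigma>])
      qed
      moreover have "(of_int (n \<tau>) / of_nat q :: complex) = of_real (rr \<tau>)"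
        unfolding rr_def by simp
      ultimately show "fac (of_int (n \<tau>) / of_nat q) (\<sigma> (- \<tau> (zeta p))) = fac (of_real (rr \<tau>)) (- \<sigma> (\<tau> (zeta p)))"
        by simp
    qed
    finally have "fps_conj \<sigma> F = (\<Prod>\<tau>\<in>S. fac (of_real (rr \<tau>)) (- \<sigma> (\<tau> (zeta p))))" .
    moreover have "norm (fps_nth (\<Prod>\<tau>\<in>S. fac (of_real (rr \<tau>)) (- \<sigma> (\<tau> (zeta p)))) i) \<le> fps_nth (G R) i"
      unfolding R_def
    proof (intro maj_prod fS)
      fix \<tau> assume "\<tau> \<in> S"
      then have "\<tau> \<in> gal_cyc p" using SG by blast
      then show "norm (- \<sigma> (\<tau> (zeta p))) = 1" using gg_norm[OF p \<sigma>] by simp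
    qed
    ultimately show ?thesis by simp
  qed
  have C1: "\<forall>\<sigma>\<in>gal_cyc p. \<forall>t. norm t < 1 \<longrightarrow> summable (\<lambda>k. fps_nth (fps_conj \<sigma> F) k * t ^ k)"
  proof (intro ballI allI impI)
    fix \<sigma> t assume \<sigma>: "\<sigma> \<in> gal_cyc p" and t: "norm (t::complex) < 1"
    show "summable (\<lambda>k. fps_nth (fps_conj \<sigma> F) k * t ^ k)"
      by (rule series_bound(1)[OF R0 maj[OF \<sigma>] t])
  qed
  have C2: "(\<forall>\<sigma>\<in>gal_cyc p. \<forall>t. \<forall>k::nat. norm t < 1 \<longrightarrow>
            norm ((\<Sum>i. fps_nth (fps_conj \<sigma> F) i * t ^ i)
                  - (\<Sum>i\<le>k. fps_nth (fps_conj \<sigma> F) i * t ^ i))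
            \<le> \<bar>(- ((\<Sum>\<tau>\<in>gal_cyc p. real_of_int (n \<tau>)) / real q)) gchoose (k + 1)\<bar>
               * norm t ^ (k + 1)
               / (1 - norm t) powr ((\<Sum>\<tau>\<in>gal_cyc p. real_of_int (n \<tau>)) / real q + real k + 1))"
    if nb: "\<forall>\<tau>\<in>gal_cyc p. 0 \<le> n \<tau> \<and> n \<tau> \<le> int q"
  proof (intro ballI allI impI)
    fix \<sigma> t k assume \<sigma>: "\<sigma> \<in> gal_cyc p" and t: "norm (t::complex) < 1"
    have "R = (\<Sum>\<tau>\<in>S. rr \<tau>)"
      unfolding R_def
    proof (intro sum.cong refl)
      fix \<tau> assume "\<tau> \<in> S"
      then have "\<tau> \<in> gal_cyc p" using SG by blast
      then have "n \<tau> \<ge> 0" using nb by blast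
      then show "\<bar>rr \<tau>\<bar> = rr \<tau>" unfolding rr_def by simp
    qed
    also have "\<dots> = (\<Sum>\<tau>\<in>gal_cyc p. real_of_int (n \<tau>)) / real q"
      unfolding sumR rr_def by (simp add: sum_divide_distrib)
    finally have Rm: "R = (\<Sum>\<tau>\<in>gal_cyc p. real_of_int (n \<tau>)) / real q" .
    have "fps_nth (G R) (k + 1) = \<bar>fps_nth (G R) (k + 1)\<bar>" using G_nonneg[OF R0] by simp
    also have "\<dots> = \<bar>(- R) gchoose (k + 1)\<bar>" unfolding G_def by (simp add: abs_mult)
    finally have Gabs: "fps_nth (G R) (k + 1) = \<bar>(- R) gchoose (k + 1)\<bar>" .
    show "norm ((\<Sum>i. fps_nth (fps_conj \<sigma> F) i * t ^ i)
                  - (\<Sum>i\<le>k. fps_nth (fps_conj \<sigma> F) i * t ^ i))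
            \<le> \<bar>(- ((\<Sum>\<tau>\<in>gal_cyc p. real_of_int (n \<tau>)) / real q)) gchoose (k + 1)\<bar>
               * norm t ^ (k + 1)
               / (1 - norm t) powr ((\<Sum>\<tau>\<in>gal_cyc p. real_of_int (n \<tau>)) / real q + real k + 1)"
      using series_bound(2)[OF R0 maj[OF \<sigma>] t, of k] unfolding Gabs[symmetric] Rm[symmetric] .
  qed
  show ?thesis by (intro conjI impI A B C1 C2)
qed



end
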